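(* Let $K_1,\dots,K_n\subset\mathbb R^d$ be convex bodies such that $K:=K_1\cap\dots\cap K_n$ satisfies $\dim(K)<d$. Suppose $x\in K$ lies in the boundary of every $K_i$, $i=1,\dots,n$. Then there exist nonempty finite collections of closed half-spaces $\{H^+(i,j)\}_{j\in J_i}$, $i=1,\dots,n$, such that for all $i$ and $j\in J_i$ the boundary hyperplane of $H^+(i,j)$ is a supporting hyperplane of $K_i$ at $x$ (with $K_i\subset H^+(i,j)$), and $$\dim\Big(\bigcap_{j\in J_1}H^+(1,j)\cap\dots\cap\bigcap_{j\in J_n}H^+(n,j)\Big)<d.$$
   Context: A convex body is a nonempty compact convex subset of $\mathbb R^d$; the dimension of a convex set is the dimension of its affine hull. *)

theory Defs
  imports "HOL-Analysis.Analysis"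
begin

definition convex_body :: "'a::euclidean_space set \<Rightarrow> bool" where
  "convex_body K \<longleftrightarrow> K \<noteq> {} \<and> compact K \<and> convex K"

definition closed_halfspace :: "'a::euclidean_space \<Rightarrow> real \<Rightarrow> 'a set" where
  "closed_halfspace a b = {y. a \<bullet> y \<le> b}"

definition supporting_halfspace_at :: "'a::euclidean_space set \<Rightarrow> 'a \<Rightarrow> 'a \<Rightarrow> real \<Rightarrow> bool" where
  "supporting_halfspace_at K x a b \<longleftrightarrow>
     a \<noteq> 0 \<and> a \<bullet> x = b \<and> K \<subseteq> closed_halfspace a b"

end

theory Submission
  imports Defs
begin


lemma hyp_lemma:
  fixes K :: "'a::euclidean_space set"
  assumes "aff_dim K < int DIM('a)" "x \<in> K"
  shows "\<exists>e. e \<noteq> 0 \<and> (\<forall>y\<in>K. e \<bullet> y = e \<bullet> x)"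
proof -
  have "x \<in> affine hull K" by (rule hull_inc[OF assms(2)])
  then have eq: "aff_dim K = int (dim ((+) (- x) ` K))" by (rule aff_dim_eq_dim)
  have "int (dim ((+) (- x) ` K)) < int DIM('a)" using assms(1) unfolding eq .
  then have "dim ((+) (- x) ` K) < DIM('a)" by (simp only: of_nat_less_iff)
  then obtain e :: 'a where e: "e \<noteq> 0" "span ((+) (- x) ` K) \<subseteq> {z. e \<bullet> z = 0}"
    using lowdim_subset_hyperplane by blast
  have "\<forall>y\<in>K. e \<bullet> y = e \<bullet> x"
  proof
    fix y assume "y \<in> K"
    then have "- x + y \<in> (+) (- x) ` K" by (rule imageI)
    then have "- x + y \<in> span ((+) (- x) ` K)" by (rule span_base)
    then have "e \<bullet> (- x + y) = 0" using e by blast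
    then show "e \<bullet> y = e \<bullet> x" by (simp add: inner_diff_right)
  qed
  then show ?thesis using e by blast
qed

lemma nonempty_interior_aff_dim:
  fixes S :: "'a::euclidean_space set"
  assumes "interior S \<noteq> {}"
  shows "aff_dim S = int DIM('a)"
  using assms interior_rel_interior_gen[of S] by (metis)

lemma empty_interior_aff_dim:
  fixes S :: "'a::euclidean_space set"
  assumes "convex S" "S \<noteq> {}" "interior S = {}"
  shows "aff_dim S < int DIM('a)"
proof -
  have "rel_interior S \<noteq> {}" using assms rel_interior_eq_empty by blast
  then have "aff_dim S \<noteq> int DIM('a)" using assms(3) interior_rel_interior_gen[of S] by auto
  then show ?thesis using aff_dim_le_DIM[of S] by linarith
qed

lemma support_lemma:
  fixes K :: "'a::euclidean_space set"
  assumes "convex K" "x \<in> K" "x \<in> frontier K"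
  shows "\<exists>a. a \<noteq> 0 \<and> (\<forall>y\<in>K. a \<bullet> y \<le> a \<bullet> x)"
proof (cases "interior K = {}")
  case True
  then have "aff_dim K < int DIM('a)" using assms empty_interior_aff_dim by blast
  then obtain e where "e \<noteq> 0" "\<forall>y\<in>K. e \<bullet> y = e \<bullet> x" using hyp_lemma assms(2) by blast
  then show ?thesis by force
next
  case False
  have "x \<notin> interior K" using assms(3) by (simp add: frontier_def)
  then have "interior K \<inter> {x} = {}" by auto
  then obtain a b where ab: "a \<noteq> 0" "\<forall>y\<in>interior K. a \<bullet> y \<le> b" "\<forall>y\<in>{x}. a \<bullet> y \<ge> b"
    using separating_hyperplane_sets[of "interior K" "{x}"] False convex_interior[OF assms(1)]
    by auto
  have "interior K \<subseteq> {y. a \<bullet> y \<le> b}" using ab by auto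
  then have "closure (interior K) \<subseteq> {y. a \<bullet> y \<le> b}"
    by (simp add: closed_halfspace_le closure_minimal)
  then have "K \<subseteq> {y. a \<bullet> y \<le> b}"
    using convex_closure_interior[OF assms(1)] False closure_subset by blast
  then show ?thesis using ab by force
qed

lemma aff_dim_sub_hyperplane:
  fixes P :: "'a::euclidean_space set"
  assumes "e \<noteq> 0" "P \<subseteq> {y. e \<bullet> y = e \<bullet> x}"
  shows "aff_dim P < int DIM('a)"
proof -
  have "aff_dim P \<le> aff_dim {y. e \<bullet> y = e \<bullet> x}" using assms(2) aff_dim_subset by blast
  also have "\<dots> = int DIM('a) - 1" using assms(1) by simp
  finally show ?thesis by linarith
qed



lemma two_lemma:
  fixes A B :: "'a::euclidean_space set"
  assumes oA: "open A" and cA: "convex A" and oB: "open B" and cB: "convex B"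
    and AB: "A \<inter> B \<noteq> {}" and xA: "x \<in> closure A" and xB: "x \<in> closure B"
    and bn: "\<forall>y\<in>A \<inter> B. b \<bullet> y \<le> b \<bullet> x"
  shows "\<exists>c. (\<forall>y\<in>A. c \<bullet> y \<le> c \<bullet> x) \<and> (\<forall>z\<in>B. (b - c) \<bullet> z \<le> (b - c) \<bullet> x)"
proof -
  obtain w where w: "w \<in> A" "w \<in> B" using AB by blast
  define S :: "('a \<times> real) set" where "S = {p. fst p \<in> A \<and> snd p < b \<bullet> fst p - b \<bullet> x}"
  define T :: "('a \<times> real) set" where "T = B \<times> {0..}"
  have cS: "convex S"
    unfolding convex_def S_def
  proof (intro allI impI ballI, clarsimp)
    fix y1 t1 y2 t2 and u v :: real
    assume h: "y1 \<in> A" "t1 < b \<bullet> y1 - b \<bullet> x" "y2 \<in> A" "t2 < b \<bullet> y2 - b \<bullet> x" "0 \<le> u" "0 \<le> v" "u + v = 1"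
    show "u *\<^sub>R y1 + v *\<^sub>R y2 \<in> A \<and>
          u * t1 + v * t2 < b \<bullet> (u *\<^sub>R y1 + v *\<^sub>R y2) - b \<bullet> x"
    proof
      show "u *\<^sub>R y1 + v *\<^sub>R y2 \<in> A" using h cA by (simp add: convexD)
      have e1: "u * t1 \<le> u * (b \<bullet> y1 - b \<bullet> x)" using h by (simp add: mult_left_mono)
      have e2: "v * t2 \<le> v * (b \<bullet> y2 - b \<bullet> x)" using h by (simp add: mult_left_mono)
      have "u > 0 \<or> v > 0" using h by linarith
      then have "u * t1 + v * t2 < u * (b \<bullet> y1 - b \<bullet> x) + v * (b \<bullet> y2 - b \<bullet> x)"
        using e1 e2 h by (smt (verit) mult_strict_left_mono)
      also have "\<dots> = b \<bullet> (u *\<^sub>R y1 + v *\<^sub>R y2) - b \<bullet> x"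
        using h(7) by (simp add: inner_add_right algebra_simps flip: distrib_right)
      finally show "u * t1 + v * t2 < b \<bullet> (u *\<^sub>R y1 + v *\<^sub>R y2) - b \<bullet> x" .
    qed
  qed
  have cT: "convex T" unfolding T_def using cB by (simp add: convex_Times)
  have "(w, b \<bullet> w - b \<bullet> x - 1) \<in> S" unfolding S_def using w by auto
  then have nS: "S \<noteq> {}" by blast
  have nT: "T \<noteq> {}" unfolding T_def using w by auto
  have dST: "S \<inter> T = {}"
  proof (rule ccontr)
    assume "S \<inter> T \<noteq> {}"
    then obtain y t where "y \<in> A" "t < b \<bullet> y - b \<bullet> x" "y \<in> B" "0 \<le> t"
      unfolding S_def T_def by auto
    then show False using bn by force
  qed
  obtain p \<beta> where p: "p \<noteq> 0" "\<forall>q\<in>S. p \<bullet> q \<le> \<beta>" "\<forall>q\<in>T. p \<bullet> q \<ge> \<beta>"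
    using separating_hyperplane_sets[OF cS cT nS nT dST] by blast
  obtain c s where ps: "p = (c, s)" by (cases p)
  have hS: "\<And>y t. y \<in> A \<Longrightarrow> t < b \<bullet> y - b \<bullet> x \<Longrightarrow> c \<bullet> y + s * t \<le> \<beta>"
    using p(2) ps unfolding S_def by auto
  have hT: "\<And>z t. z \<in> B \<Longrightarrow> 0 \<le> t \<Longrightarrow> c \<bullet> z + s * t \<ge> \<beta>"
    using p(3) ps unfolding T_def by auto
  have s0: "s \<ge> 0"
  proof (rule ccontr)
    assume "\<not> s \<ge> 0"
    define t where "t = max 0 ((c \<bullet> w - \<beta> + 1) / (- s))"
    have "t \<ge> 0" unfolding t_def by simp
    have "t \<ge> (c \<bullet> w - \<beta> + 1) / (- s)" unfolding t_def by simp
    then have "(- s) * t \<ge> (- s) * ((c \<bullet> w - \<beta> + 1) / (- s))" using \<open>\<not> s \<ge> 0\<close>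
      by (intro mult_left_mono) auto
    moreover have "(- s) * ((c \<bullet> w - \<beta> + 1) / (- s)) = c \<bullet> w - \<beta> + 1" using \<open>\<not> s \<ge> 0\<close>
      by simp
    ultimately have "(- s) * t \<ge> c \<bullet> w - \<beta> + 1" by linarith
    then have "c \<bullet> w + s * t < \<beta>" by linarith
    then show False using hT[OF w(2) \<open>t \<ge> 0\<close>] by linarith
  qed
  have sn0: "s \<noteq> 0"
  proof
    assume "s = 0"
    then have c0: "c \<noteq> 0" using p(1) ps by (auto simp: zero_prod_def)
    obtain \<epsilon> where \<epsilon>: "\<epsilon> > 0" "ball w \<epsilon> \<subseteq> A" using oA w(1) open_contains_ball by blast
    define y where "y = w + (\<epsilon> / 2 / norm c) *\<^sub>R c"
    have "dist w y < \<epsilon>" unfolding y_def dist_norm using \<epsilon> c0 by simp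
    then have yA: "y \<in> A" using \<epsilon> by auto
    have "c \<bullet> y = c \<bullet> w + \<epsilon> / 2 * norm c"
      unfolding y_def using c0 by (simp add: inner_add_right power2_norm_eq_inner[symmetric] power2_eq_square)
    then have "c \<bullet> y > c \<bullet> w" using c0 \<epsilon> by simp
    moreover have "c \<bullet> y \<le> \<beta>" using hS[OF yA, of "b \<bullet> y - b \<bullet> x - 1"] \<open>s = 0\<close> by simp
    moreover have "c \<bullet> w \<ge> \<beta>" using hT[OF w(2), of 0] by simp
    ultimately show False by linarith
  qed
  have spos: "s > 0" using s0 sn0 by simp
  have hA: "c \<bullet> y + s * (b \<bullet> y - b \<bullet> x) \<le> \<beta>" if yA: "y \<in> A" for y
  proof (rule ccontr)
    assume ng: "\<not> ?thesis"
    define \<delta> where "\<delta> = (c \<bullet> y + s * (b \<bullet> y - b \<bullet> x) - \<beta>) / (2 * s)"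
    have "\<delta> > 0" using ng spos unfolding \<delta>_def by simp
    have "s * \<delta> = (c \<bullet> y + s * (b \<bullet> y - b \<bullet> x) - \<beta>) / 2" unfolding \<delta>_def using spos by simp
    then have "c \<bullet> y + s * ((b \<bullet> y - b \<bullet> x) - \<delta>) > \<beta>" using ng by (simp add: right_diff_distrib)
    moreover have "c \<bullet> y + s * ((b \<bullet> y - b \<bullet> x) - \<delta>) \<le> \<beta>"
      using hS[OF yA] \<open>\<delta> > 0\<close> by simp
    ultimately show False by linarith
  qed
  have hB: "c \<bullet> z \<ge> \<beta>" if "z \<in> B" for z using hT[OF that, of 0] by simp
  have "A \<subseteq> {y. (c + s *\<^sub>R b) \<bullet> y \<le> \<beta> + s * (b \<bullet> x)}"
    using hA by (auto simp: inner_add_left algebra_simps)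
  then have "closure A \<subseteq> {y. (c + s *\<^sub>R b) \<bullet> y \<le> \<beta> + s * (b \<bullet> x)}"
    by (simp add: closed_halfspace_le closure_minimal)
  then have "(c + s *\<^sub>R b) \<bullet> x \<le> \<beta> + s * (b \<bullet> x)" using xA by blast
  then have cx1: "c \<bullet> x \<le> \<beta>" by (simp add: inner_add_left)
  have "B \<subseteq> {z. c \<bullet> z \<ge> \<beta>}" using hB by auto
  then have "closure B \<subseteq> {z. c \<bullet> z \<ge> \<beta>}"
    by (simp add: closed_halfspace_ge closure_minimal)
  then have cx2: "c \<bullet> x \<ge> \<beta>" using xB by blast
  have beq: "\<beta> = c \<bullet> x" using cx1 cx2 by simp
  define c' where "c' = (1 / s) *\<^sub>R c + b"
  have r1: "c' \<bullet> y \<le> c' \<bullet> x" if "y \<in> A" for y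
  proof -
    have "c \<bullet> y + s * (b \<bullet> y - b \<bullet> x) \<le> c \<bullet> x" using hA[OF that] beq by simp
    then have "(c \<bullet> y + s * (b \<bullet> y)) / s \<le> (c \<bullet> x + s * (b \<bullet> x)) / s"
      using spos by (simp add: divide_right_mono algebra_simps)
    then show ?thesis unfolding c'_def using spos by (simp add: inner_add_left add_divide_distrib)
  qed
  have r2: "(b - c') \<bullet> z \<le> (b - c') \<bullet> x" if "z \<in> B" for z
  proof -
    have "c \<bullet> x \<le> c \<bullet> z" using hB[OF that] beq by simp
    then have "c \<bullet> x / s \<le> c \<bullet> z / s" using spos by (simp add: divide_right_mono)
    then show ?thesis unfolding c'_def by (simp add: inner_diff_left inner_add_left)
  qed
  show ?thesis using r1 r2 by blast
qed



lemma closure_INT_aux: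
  fixes U :: "nat \<Rightarrow> 'a::euclidean_space set"
  assumes "\<forall>i\<in>I. open (U i) \<and> convex (U i) \<and> x \<in> closure (U i)"
    and "(\<Inter>i\<in>I. U i) \<noteq> {}"
  shows "x \<in> closure (\<Inter>i\<in>I. U i)"
proof -
  have "closure (\<Inter>(U ` I)) = (if \<Inter>(U ` I) = {} then {} else \<Inter>(closure ` (U ` I)))"
    by (rule closure_Inter_convex_open) (use assms(1) in auto)
  then show ?thesis using assms by auto
qed

lemma sumrule:
  fixes U :: "nat \<Rightarrow> 'a::euclidean_space set"
  shows "(\<forall>i\<in>{1..n}. open (U i) \<and> convex (U i) \<and> x \<in> closure (U i)) \<Longrightarrow>
    (\<Inter>i\<in>{1..n}. U i) \<noteq> {} \<Longrightarrow> (\<forall>y\<in>(\<Inter>i\<in>{1..n}. U i). b \<bullet> y \<le> b \<bullet> x) \<Longrightarrow>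
    \<exists>a. (\<forall>i\<in>{1..n}. \<forall>y\<in>U i. a i \<bullet> y \<le> a i \<bullet> x) \<and> (\<Sum>i=1..n. a i) = b"
proof (induction n arbitrary: b)
  case 0
  have "b \<bullet> (x + b) \<le> b \<bullet> x" using 0(3) by simp
  then have "b \<bullet> b \<le> 0" by (simp add: inner_add_right)
  then have "b = 0" by (metis inner_eq_zero_iff inner_ge_zero order_antisym)
  then show ?case by auto
next
  case (Suc n)
  define W where "W = (\<Inter>i\<in>{1..n}. U i)"
  have split: "(\<Inter>i\<in>{1..Suc n}. U i) = W \<inter> U (Suc n)"
    unfolding W_def by (auto simp: atLeastAtMostSuc_conv)
  have hyp: "\<forall>i\<in>{1..n}. open (U i) \<and> convex (U i) \<and> x \<in> closure (U i)" using Suc(2) by auto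
  have oW: "open W" unfolding W_def using hyp by (intro open_INT) auto
  have cW: "convex W" unfolding W_def using hyp by (intro convex_INT) auto
  have nW: "W \<noteq> {}" using Suc(3) split by auto
  have xW: "x \<in> closure W" unfolding W_def using closure_INT_aux[OF hyp] nW W_def by blast
  have hU: "open (U (Suc n))" "convex (U (Suc n))" "x \<in> closure (U (Suc n))" using Suc(2) by auto
  obtain c where c: "\<forall>y\<in>W. c \<bullet> y \<le> c \<bullet> x" "\<forall>z\<in>U (Suc n). (b - c) \<bullet> z \<le> (b - c) \<bullet> x"
  proof -
    have AB: "W \<inter> U (Suc n) \<noteq> {}" using Suc(3) split by simp
    have bn: "\<forall>y\<in>W \<inter> U (Suc n). b \<bullet> y \<le> b \<bullet> x" using Suc(4) split by simp
    show ?thesis using two_lemma[OF oW cW hU(1) hU(2) AB xW hU(3) bn] that by blast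
  qed
  obtain a where a: "\<forall>i\<in>{1..n}. \<forall>y\<in>U i. a i \<bullet> y \<le> a i \<bullet> x" "(\<Sum>i=1..n. a i) = c"
    using Suc.IH[OF hyp nW[unfolded W_def] c(1)[unfolded W_def]] by blast
  define a' where "a' = a(Suc n := b - c)"
  have "(\<Sum>i=1..Suc n. a' i) = (\<Sum>i=1..n. a' i) + a' (Suc n)" by simp
  also have "(\<Sum>i=1..n. a' i) = (\<Sum>i=1..n. a i)" unfolding a'_def by (intro sum.cong) auto
  finally have "(\<Sum>i=1..Suc n. a' i) = b" using a(2) unfolding a'_def by simp
  moreover have "\<forall>i\<in>{1..Suc n}. \<forall>y\<in>U i. a' i \<bullet> y \<le> a' i \<bullet> x"
  proof (intro ballI)
    fix i y assume "i \<in> {1..Suc n}" "y \<in> U i"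
    then show "a' i \<bullet> y \<le> a' i \<bullet> x"
      by (cases "i = Suc n") (use a(1) c(2) in \<open>auto simp: a'_def\<close>)
  qed
  ultimately show ?case by blast
qed

lemma claim2:
  fixes U :: "nat \<Rightarrow> 'a::euclidean_space set"
  shows "(\<forall>i\<in>{1..n}. open (U i) \<and> convex (U i) \<and> x \<in> closure (U i)) \<Longrightarrow>
    (\<Inter>i\<in>{1..n}. U i) = {} \<Longrightarrow>
    \<exists>a. (\<forall>i\<in>{1..n}. \<forall>y\<in>U i. a i \<bullet> y \<le> a i \<bullet> x) \<and> (\<Sum>i=1..n. a i) = 0 \<and> (\<exists>i\<in>{1..n}. a i \<noteq> 0)"
proof (induction n)
  case 0
  then show ?case by simp
next
  case (Suc n)
  define W where "W = (\<Inter>i\<in>{1..n}. U i)"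
  have split: "(\<Inter>i\<in>{1..Suc n}. U i) = W \<inter> U (Suc n)"
    unfolding W_def by (auto simp: atLeastAtMostSuc_conv)
  have hyp: "\<forall>i\<in>{1..n}. open (U i) \<and> convex (U i) \<and> x \<in> closure (U i)" using Suc(2) by auto
  have hU: "open (U (Suc n))" "convex (U (Suc n))" "x \<in> closure (U (Suc n))" using Suc(2) by auto
  show ?case
  proof (cases "W = {}")
    case True
    obtain a where a: "\<forall>i\<in>{1..n}. \<forall>y\<in>U i. a i \<bullet> y \<le> a i \<bullet> x" "(\<Sum>i=1..n. a i) = 0" "\<exists>i\<in>{1..n}. a i \<noteq> 0"
      using Suc.IH[OF hyp True[unfolded W_def]] by blast
    define a' where "a' = a(Suc n := 0)"
    have "(\<Sum>i=1..Suc n. a' i) = (\<Sum>i=1..n. a' i) + a' (Suc n)" by simp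
    also have "(\<Sum>i=1..n. a' i) = (\<Sum>i=1..n. a i)" unfolding a'_def by (intro sum.cong) auto
    finally have "(\<Sum>i=1..Suc n. a' i) = 0" using a(2) unfolding a'_def by simp
    moreover have "\<forall>i\<in>{1..Suc n}. \<forall>y\<in>U i. a' i \<bullet> y \<le> a' i \<bullet> x"
    proof (intro ballI)
      fix i y assume "i \<in> {1..Suc n}" "y \<in> U i"
      then show "a' i \<bullet> y \<le> a' i \<bullet> x"
        by (cases "i = Suc n") (use a(1) in \<open>auto simp: a'_def\<close>)
    qed
    moreover have "\<exists>i\<in>{1..Suc n}. a' i \<noteq> 0"
    proof -
      obtain i where i: "i \<in> {1..n}" "a i \<noteq> 0" using a(3) by blast
      then have "i \<noteq> Suc n" "i \<in> {1..Suc n}" by auto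
      then show ?thesis using i unfolding a'_def by auto
    qed
    ultimately show ?thesis by blast
  next
    case False
    have oW: "open W" unfolding W_def using hyp by (intro open_INT) auto
    have cW: "convex W" unfolding W_def using hyp by (intro convex_INT) auto
    have xW: "x \<in> closure W" unfolding W_def using closure_INT_aux[OF hyp] False W_def by blast
    have nU: "U (Suc n) \<noteq> {}" using hU(3) by auto
    have dj: "W \<inter> U (Suc n) = {}" using Suc(3) split by simp
    obtain e \<beta> where e: "e \<noteq> 0" "\<forall>y\<in>W. e \<bullet> y \<le> \<beta>" "\<forall>z\<in>U (Suc n). e \<bullet> z \<ge> \<beta>"
      using separating_hyperplane_sets[OF cW hU(2) False nU dj] by blast
    have "W \<subseteq> {y. e \<bullet> y \<le> \<beta>}" using e by auto
    then have "closure W \<subseteq> {y. e \<bullet> y \<le> \<beta>}" by (simp add: closed_halfspace_le closure_minimal)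
    then have ex1: "e \<bullet> x \<le> \<beta>" using xW by blast
    have "U (Suc n) \<subseteq> {y. e \<bullet> y \<ge> \<beta>}" using e by auto
    then have "closure (U (Suc n)) \<subseteq> {y. e \<bullet> y \<ge> \<beta>}" by (simp add: closed_halfspace_ge closure_minimal)
    then have ex2: "e \<bullet> x \<ge> \<beta>" using hU(3) by blast
    have eW: "\<forall>y\<in>W. e \<bullet> y \<le> e \<bullet> x" using e(2) ex2 by fastforce
    obtain a where a: "\<forall>i\<in>{1..n}. \<forall>y\<in>U i. a i \<bullet> y \<le> a i \<bullet> x" "(\<Sum>i=1..n. a i) = e"
      using sumrule[OF hyp False[unfolded W_def] eW[unfolded W_def]] by blast
    define a' where "a' = a(Suc n := - e)"
    have "(\<Sum>i=1..Suc n. a' i) = (\<Sum>i=1..n. a' i) + a' (Suc n)" by simp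
    also have "(\<Sum>i=1..n. a' i) = (\<Sum>i=1..n. a i)" unfolding a'_def by (intro sum.cong) auto
    finally have "(\<Sum>i=1..Suc n. a' i) = 0" using a(2) unfolding a'_def by simp
    moreover have "\<forall>i\<in>{1..Suc n}. \<forall>y\<in>U i. a' i \<bullet> y \<le> a' i \<bullet> x"
    proof (intro ballI)
      fix i y assume i: "i \<in> {1..Suc n}" and y: "y \<in> U i"
      show "a' i \<bullet> y \<le> a' i \<bullet> x"
      proof (cases "i = Suc n")
        case True
        then have "e \<bullet> y \<ge> \<beta>" using e(3) y by blast
        then show ?thesis using True ex1 by (simp add: a'_def)
      next
        case False
        then show ?thesis using a(1) i y by (simp add: a'_def)
      qed
    qed
    moreover have "\<exists>i\<in>{1..Suc n}. a' i \<noteq> 0" using e(1) unfolding a'_def by force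
    ultimately show ?thesis by blast
  qed
qed



theorem theorem2p19:
  fixes K :: "nat \<Rightarrow> 'a::euclidean_space set" and n :: nat and x :: 'a
  assumes bodies: "\<And>i. i \<in> {1..n} \<Longrightarrow> convex_body (K i)"
    and lowdim: "aff_dim (\<Inter>i\<in>{1..n}. K i) < int DIM('a)"
    and xK: "x \<in> (\<Inter>i\<in>{1..n}. K i)"
    and xbd: "\<And>i. i \<in> {1..n} \<Longrightarrow> x \<in> frontier (K i)"
  shows "\<exists>H :: nat \<Rightarrow> ('a \<times> real) set.
           (\<forall>i\<in>{1..n}. finite (H i) \<and> H i \<noteq> {} \<and>
               (\<forall>(a, b)\<in>H i. supporting_halfspace_at (K i) x a b)) \<and>
           aff_dim (\<Inter>i\<in>{1..n}. \<Inter>(a, b)\<in>H i. closed_halfspace a b) < int DIM('a)"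
proof -
  have cvx: "convex (K i)" "K i \<noteq> {}" "x \<in> K i" if "i \<in> {1..n}" for i
    using bodies[OF that] xK that by (auto simp: convex_body_def)
  have fin: "?thesis" if F: "\<forall>i\<in>{1..n}. finite (F i) \<and> F i \<noteq> {} \<and> (\<forall>a\<in>F i. a \<noteq> 0 \<and> (\<forall>y\<in>K i. a \<bullet> y \<le> a \<bullet> x))"
    and e: "e \<noteq> 0" and sub: "(\<Inter>i\<in>{1..n}. \<Inter>a\<in>F i. {y. a \<bullet> y \<le> a \<bullet> x}) \<subseteq> {y. e \<bullet> y = e \<bullet> x}"
    for F :: "nat \<Rightarrow> 'a set" and e :: 'a
  proof -
    define H where "H = (\<lambda>i. (\<lambda>a. (a, a \<bullet> x)) ` F i)"
    have eq: "(\<Inter>i\<in>{1..n}. \<Inter>(a, b)\<in>H i. closed_halfspace a b) = (\<Inter>i\<in>{1..n}. \<Inter>a\<in>F i. {y. a \<bullet> y \<le> a \<bullet> x})"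
      unfolding H_def closed_halfspace_def by auto
    have "\<forall>i\<in>{1..n}. finite (H i) \<and> H i \<noteq> {} \<and> (\<forall>(a, b)\<in>H i. supporting_halfspace_at (K i) x a b)"
      using F unfolding H_def supporting_halfspace_at_def closed_halfspace_def by auto
    moreover have "aff_dim (\<Inter>i\<in>{1..n}. \<Inter>(a, b)\<in>H i. closed_halfspace a b) < int DIM('a)"
      unfolding eq by (rule aff_dim_sub_hyperplane[OF e sub])
    ultimately show ?thesis by blast
  qed
  have "\<forall>i\<in>{1..n}. \<exists>a. a \<noteq> 0 \<and> (\<forall>y\<in>K i. a \<bullet> y \<le> a \<bullet> x)"
  proof
    fix i assume i: "i \<in> {1..n}"
    show "\<exists>a. a \<noteq> 0 \<and> (\<forall>y\<in>K i. a \<bullet> y \<le> a \<bullet> x)"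
      by (rule support_lemma[OF cvx(1)[OF i] cvx(3)[OF i] xbd[OF i]])
  qed
  from bchoice[OF this] obtain s where s: "\<forall>i\<in>{1..n}. s i \<noteq> 0 \<and> (\<forall>y\<in>K i. s i \<bullet> y \<le> s i \<bullet> x)"
    by blast
  show ?thesis
  proof (cases "\<exists>i0\<in>{1..n}. interior (K i0) = {}")
    case True
    then obtain i0 where i0: "i0 \<in> {1..n}" "interior (K i0) = {}" by blast
    have "aff_dim (K i0) < int DIM('a)" using empty_interior_aff_dim cvx[OF i0(1)] i0(2) by blast
    then obtain e where e: "e \<noteq> 0" "\<forall>y\<in>K i0. e \<bullet> y = e \<bullet> x" using hyp_lemma cvx(3)[OF i0(1)] by blast
    define F where "F = (\<lambda>i. if i = i0 then {e, -e} else {s i})"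
    show ?thesis
    proof (rule fin[of F e])
      show "\<forall>i\<in>{1..n}. finite (F i) \<and> F i \<noteq> {} \<and> (\<forall>a\<in>F i. a \<noteq> 0 \<and> (\<forall>y\<in>K i. a \<bullet> y \<le> a \<bullet> x))"
        using s e unfolding F_def by auto
      show "e \<noteq> 0" by fact
      show "(\<Inter>i\<in>{1..n}. \<Inter>a\<in>F i. {y. a \<bullet> y \<le> a \<bullet> x}) \<subseteq> {y. e \<bullet> y = e \<bullet> x}"
      proof
        fix y assume "y \<in> (\<Inter>i\<in>{1..n}. \<Inter>a\<in>F i. {y. a \<bullet> y \<le> a \<bullet> x})"
        then have "y \<in> (\<Inter>a\<in>F i0. {y. a \<bullet> y \<le> a \<bullet> x})" using i0(1) by blast
        then have "e \<bullet> y \<le> e \<bullet> x" "(-e) \<bullet> y \<le> (-e) \<bullet> x" unfolding F_def by auto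
        then show "y \<in> {y. e \<bullet> y = e \<bullet> x}" by simp
      qed
    qed
  next
    case False
    define U where "U = (\<lambda>i. interior (K i))"
    have cl: "closure (U i) = closure (K i)" if "i \<in> {1..n}" for i
      unfolding U_def using convex_closure_interior cvx[OF that] False that by blast
    have hyp: "\<forall>i\<in>{1..n}. open (U i) \<and> convex (U i) \<and> x \<in> closure (U i)"
    proof
      fix i assume i: "i \<in> {1..n}"
      have "x \<in> closure (K i)" using cvx(3)[OF i] closure_subset by blast
      then have "x \<in> closure (U i)" using cl[OF i] by simp
      then show "open (U i) \<and> convex (U i) \<and> x \<in> closure (U i)"
        unfolding U_def using convex_interior[OF cvx(1)[OF i]] by simp
    qed
    have emp: "(\<Inter>i\<in>{1..n}. U i) = {}"
    proof (rule ccontr)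
      assume ne: "(\<Inter>i\<in>{1..n}. U i) \<noteq> {}"
      have "open (\<Inter>i\<in>{1..n}. U i)" using hyp by (intro open_INT) auto
      moreover have "(\<Inter>i\<in>{1..n}. U i) \<subseteq> (\<Inter>i\<in>{1..n}. K i)" unfolding U_def using interior_subset by blast
      ultimately have "(\<Inter>i\<in>{1..n}. U i) \<subseteq> interior (\<Inter>i\<in>{1..n}. K i)" by (rule interior_maximal[rotated])
      then have "interior (\<Inter>i\<in>{1..n}. K i) \<noteq> {}" using ne by blast
      then show False using nonempty_interior_aff_dim lowdim by fastforce
    qed
    obtain a where a: "\<forall>i\<in>{1..n}. \<forall>y\<in>U i. a i \<bullet> y \<le> a i \<bullet> x" "(\<Sum>i=1..n. a i) = 0"
      "\<exists>i\<in>{1..n}. a i \<noteq> 0"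
      using claim2[OF hyp emp] by blast
    have aK: "\<forall>y\<in>K i. a i \<bullet> y \<le> a i \<bullet> x" if i: "i \<in> {1..n}" for i
    proof -
      have "U i \<subseteq> {y. a i \<bullet> y \<le> a i \<bullet> x}" using a(1) i by auto
      then have "closure (U i) \<subseteq> {y. a i \<bullet> y \<le> a i \<bullet> x}" by (simp add: closed_halfspace_le closure_minimal)
      then show ?thesis using cl[OF i] closure_subset by blast
    qed
    obtain m where m: "m \<in> {1..n}" "a m \<noteq> 0" using a(3) by blast
    define F where "F = (\<lambda>i. insert (s i) ({a i} - {0}))"
    show ?thesis
    proof (rule fin[of F "a m"])
      show "\<forall>i\<in>{1..n}. finite (F i) \<and> F i \<noteq> {} \<and> (\<forall>b\<in>F i. b \<noteq> 0 \<and> (\<forall>y\<in>K i. b \<bullet> y \<le> b \<bullet> x))"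
        using s aK unfolding F_def by auto
      show "a m \<noteq> 0" by fact
      show "(\<Inter>i\<in>{1..n}. \<Inter>b\<in>F i. {y. b \<bullet> y \<le> b \<bullet> x}) \<subseteq> {y. a m \<bullet> y = a m \<bullet> x}"
      proof
        fix y assume y: "y \<in> (\<Inter>i\<in>{1..n}. \<Inter>b\<in>F i. {y. b \<bullet> y \<le> b \<bullet> x})"
        have ai: "0 \<le> a i \<bullet> x - a i \<bullet> y" if i: "i \<in> {1..n}" for i
        proof (cases "a i = 0")
          case True then show ?thesis by simp
        next
          case False
          then have "a i \<in> F i" unfolding F_def by auto
          then show ?thesis using y i by auto
        qed
        have "(\<Sum>i=1..n. a i \<bullet> x - a i \<bullet> y) = (\<Sum>i=1..n. a i) \<bullet> x - (\<Sum>i=1..n. a i) \<bullet> y"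
          by (simp add: inner_sum_left sum_subtractf)
        also have "\<dots> = 0" using a(2) by simp
        finally have "(\<Sum>i=1..n. a i \<bullet> x - a i \<bullet> y) = 0" .
        then have "\<forall>i\<in>{1..n}. a i \<bullet> x - a i \<bullet> y = 0"
          using sum_nonneg_eq_0_iff[of "{1..n}" "\<lambda>i. a i \<bullet> x - a i \<bullet> y"] ai by auto
        then show "y \<in> {y. a m \<bullet> y = a m \<bullet> x}" using m(1) by auto
      qed
    qed
  qed
qed

end
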